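(* Let $x\in\mathbb{R}^d$, $V\subseteq\{1,\dots,d\}$ (of any parity), and let $\theta\in\{\pm1\}^d$ with $\theta_i=1$ for $i\in V$ and $\theta_i=-1$ for $i\notin V$. Let $v = \Pi_{\{w\in\mathbb{R}^d:\theta^\top w = |V|-1\}}(x)$ and suppose $v\notin[0,1]^d$. Then there exists $i\in\{1,\dots,d\}$ such that either ($v_i>1$ and $\theta_i=1$) or ($v_i<0$ and $\theta_i=-1$).
   Context: $\Pi_C(x)$ denotes the Euclidean projection of $x$ onto a closed convex set $C$. *)

theory Defs
  imports "HOL-Analysis.Analysis"
begin

end

theory Submission
  imports Defs
begin

theorem theorem3:
  fixes x \<theta> :: "real ^ 'd" and V :: "'d set" and v :: "real ^ 'd"
  assumes theta_def: "\<forall>i. \<theta> $ i = (if i \<in> V then 1 else -1)"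
    and v_def: "v = closest_point {w. \<theta> \<bullet> w = real (card V) - 1} x"
    and not_box: "v \<notin> {w. \<forall>i. 0 \<le> w $ i \<and> w $ i \<le> 1}"
  shows "\<exists>i. (v $ i > 1 \<and> \<theta> $ i = 1) \<or> (v $ i < 0 \<and> \<theta> $ i = -1)"
proof (rule ccontr)
  assume H: "\<not> ?thesis"
  let ?S = "{w. \<theta> \<bullet> w = real (card V) - 1}"
  have tn: "\<theta> \<noteq> 0"
  proof
    assume "\<theta> = 0"
    then have "\<theta> $ i = 0" for i by simp
    with theta_def show False by (metis one_neq_zero neg_equal_0_iff_equal zero_neq_one)
  qed
  have ne: "?S \<noteq> {}"
  proof -
    have "\<theta> \<bullet> \<theta> \<noteq> 0" using tn by simp
    then have "\<theta> \<bullet> (((real (card V) - 1) / (\<theta> \<bullet> \<theta>)) *\<^sub>R \<theta>) = real (card V) - 1"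
      by simp
    then show ?thesis by blast
  qed
  have cl: "closed ?S" using closed_hyperplane by blast
  have vin: "v \<in> ?S" using closest_point_in_set[OF cl ne] v_def by simp
  obtain j0 where j0: "v $ j0 < 0 \<or> v $ j0 > 1" using not_box by (auto simp: not_le)
  have "(j0 \<in> V \<and> v $ j0 < 0) \<or> (j0 \<notin> V \<and> v $ j0 > 1)"
    using H theta_def[rule_format, of j0] j0 by (cases "j0 \<in> V") auto
  then obtain j where j: "(j \<in> V \<and> v $ j < 0) \<or> (j \<notin> V \<and> v $ j > 1)" by blast
  define f where "f i = \<theta> $ i * v $ i" for i
  define g where "g i = (if i \<in> V then 1 else 0::real)" for i
  define h where "h = g(j := g j - 1)"
  have le: "f i \<le> h i" for i
    using H theta_def[rule_format, of i] theta_def[rule_format, of j] j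
    unfolding f_def h_def g_def by (cases "i \<in> V") (auto simp: not_less split: if_splits)
  have lt: "f j < h j"
    using H theta_def[rule_format, of j] j
    unfolding f_def h_def g_def by (cases "j \<in> V") (auto simp: not_less)
  have "sum f UNIV < sum h UNIV"
    using le lt by (intro sum_strict_mono_ex1) auto
  also have "sum h UNIV = sum g UNIV - 1"
    unfolding h_def by (simp add: sum.remove[of UNIV j] algebra_simps)
  also have "sum g UNIV = real (card V)"
    unfolding g_def by (simp add: sum.If_cases)
  finally have "sum f UNIV < real (card V) - 1" .
  moreover have "sum f UNIV = \<theta> \<bullet> v" unfolding f_def inner_vec_def by simp
  ultimately show False using vin by simp
qed

end
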